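(* Let $\mathbb{K}$ be a field of characteristic $0$. For every $d\geq 4$ there is a positive integer $r_0$ such that for all $r\geq r_0$ there exists a standard graded Artinian Gorenstein $\mathbb{K}$-algebra of socle degree $d$ and codimension $r$ whose Hilbert function $(1,h_1,\ldots,h_d)$ is totally non-unimodal, i.e. $h_1>h_2>\cdots>h_{\lfloor d/2\rfloor}$. *)

theory Defs
  imports Complex_Main "HOL-Library.Poly_Mapping"
begin

text \<open>Polynomials over a field 'k in variables x_0, x_1, ... : finitely supported maps
  from monomials (exponent vectors nat =>0 nat) to coefficients.\<close>
type_synonym 'k mpoly = "(nat \<Rightarrow>\<^sub>0 nat) \<Rightarrow>\<^sub>0 'k"

definition mdeg :: "(nat \<Rightarrow>\<^sub>0 nat) \<Rightarrow> nat" where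
  "mdeg m = (\<Sum>i\<in>Poly_Mapping.keys m. Poly_Mapping.lookup m i)"

definition pscale :: "'k::field \<Rightarrow> 'k mpoly \<Rightarrow> 'k mpoly" where
  "pscale c p = Poly_Mapping.map (\<lambda>x. c * x) p"

definition pdim :: "'k::field mpoly set \<Rightarrow> nat" where
  "pdim S = vector_space.dim pscale S"

definition polyring :: "nat \<Rightarrow> 'k::field mpoly set" where
  "polyring r = {p. \<forall>m\<in>Poly_Mapping.keys p. Poly_Mapping.keys m \<subseteq> {..<r}}"

definition hom_comp :: "nat \<Rightarrow> nat \<Rightarrow> 'k::field mpoly set" where
  "hom_comp r i = {p \<in> polyring r. \<forall>m\<in>Poly_Mapping.keys p. mdeg m = i}"

definition hpart :: "nat \<Rightarrow> 'k::field mpoly \<Rightarrow> 'k mpoly" where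
  "hpart i p = (\<Sum>m\<in>{m\<in>Poly_Mapping.keys p. mdeg m = i}. Poly_Mapping.single m (Poly_Mapping.lookup p m))"

definition var :: "nat \<Rightarrow> 'k::field mpoly" where
  "var j = Poly_Mapping.single (Poly_Mapping.single j 1) 1"

definition is_ideal :: "nat \<Rightarrow> 'k::field mpoly set \<Rightarrow> bool" where
  "is_ideal r I \<longleftrightarrow> I \<subseteq> polyring r \<and> 0 \<in> I \<and>
     (\<forall>p\<in>I. \<forall>q\<in>I. p + q \<in> I) \<and> (\<forall>f\<in>polyring r. \<forall>p\<in>I. f * p \<in> I)"

definition homogeneous_ideal :: "nat \<Rightarrow> 'k::field mpoly set \<Rightarrow> bool" where
  "homogeneous_ideal r I \<longleftrightarrow> is_ideal r I \<and> (\<forall>p\<in>I. \<forall>i. hpart i p \<in> I)"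

text \<open>Hilbert function of A = R/I: h_i = dim_K A_i = dim R_i - dim I_i\<close>
definition hilb :: "nat \<Rightarrow> 'k::field mpoly set \<Rightarrow> nat \<Rightarrow> nat" where
  "hilb r I i = pdim (hom_comp r i :: 'k mpoly set) - pdim (hom_comp r i \<inter> I)"

text \<open>(I : m), the preimage in R of the socle of A = R/I\<close>
definition socle_lift :: "nat \<Rightarrow> 'k::field mpoly set \<Rightarrow> 'k mpoly set" where
  "socle_lift r I = {p \<in> polyring r. \<forall>j<r. var j * p \<in> I}"

text \<open>A = R/I is a standard graded Artinian K-algebra of socle degree d
  (A_d \<noteq> 0 and A_i = 0 for i > d)\<close>
definition artinian_socle_degree :: "nat \<Rightarrow> 'k::field mpoly set \<Rightarrow> nat \<Rightarrow> bool" where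
  "artinian_socle_degree r I d \<longleftrightarrow> homogeneous_ideal r I \<and>
     hilb r I d \<noteq> 0 \<and> (\<forall>i>d. hom_comp r i \<subseteq> I)"

text \<open>dimension of the socle (0 :_A m) = (I : m)/I of the graded Artinian algebra A = R/I of
  socle degree d, computed degreewise (components above d vanish)\<close>
definition socle_dim :: "nat \<Rightarrow> 'k::field mpoly set \<Rightarrow> nat \<Rightarrow> nat" where
  "socle_dim r I d = (\<Sum>i\<le>d. pdim (hom_comp r i \<inter> socle_lift r I) - pdim (hom_comp r i \<inter> I))"

definition AG_algebra :: "nat \<Rightarrow> 'k::field mpoly set \<Rightarrow> nat \<Rightarrow> bool" where
  "AG_algebra r I d \<longleftrightarrow> artinian_socle_degree r I d \<and> socle_dim r I d = 1"

end

theory Submission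
  imports Defs "HOL-Library.Function_Algebras"
begin



lemma lookup_pscale[simp]: "Poly_Mapping.lookup (pscale c p) k = c * Poly_Mapping.lookup p k"
  unfolding pscale_def by transfer (simp add: when_def)

interpretation P: vector_space "pscale :: 'k::field \<Rightarrow> 'k mpoly \<Rightarrow> 'k mpoly"
  by unfold_locales (auto intro!: poly_mapping_eqI simp: lookup_add algebra_simps)

definition fscale :: "'k::field \<Rightarrow> ('a \<Rightarrow> 'k) \<Rightarrow> ('a \<Rightarrow> 'k)" where
  "fscale c f = (\<lambda>x. c * f x)"

interpretation Fs: vector_space "fscale :: 'k::field \<Rightarrow> ('a \<Rightarrow> 'k) \<Rightarrow> ('a \<Rightarrow> 'k)"
  by unfold_locales (auto simp: fscale_def algebra_simps)

interpretation PF: vector_space_pair "pscale :: 'k::field \<Rightarrow> 'k mpoly \<Rightarrow> 'k mpoly" "fscale :: 'k::field \<Rightarrow> ('a \<Rightarrow> 'k) \<Rightarrow> ('a \<Rightarrow> 'k)" ..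

lemma "pdim S = P.dim S" unfolding pdim_def ..



context vector_space begin
lemma disjoint_span_zero:
  assumes C: "independent C" "finite C" and BD: "B \<subseteq> C" "D \<subseteq> C" "B \<inter> D = {}"
    and x: "x \<in> span B" "x \<in> span D"
  shows "x = 0"
proof -
  have fB: "finite B" "finite D" using BD C finite_subset by blast+
  obtain u where u: "x = (\<Sum>v\<in>B. u v *s v)" using x(1) span_finite[OF fB(1)] by blast
  obtain w where w: "x = (\<Sum>v\<in>D. w v *s v)" using x(2) span_finite[OF fB(2)] by blast
  define c where "c v = (if v \<in> B then u v else - w v)" for v
  have "(\<Sum>v\<in>B \<union> D. c v *s v) = (\<Sum>v\<in>B. c v *s v) + (\<Sum>v\<in>D. c v *s v)"
    by (rule sum.union_disjoint) (use fB BD in auto)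
  also have "(\<Sum>v\<in>B. c v *s v) = x" unfolding u by (rule sum.cong) (auto simp: c_def)
  also have "(\<Sum>v\<in>D. c v *s v) = - x" unfolding w
    by (subst sum_negf[symmetric], rule sum.cong) (use BD in \<open>auto simp: c_def\<close>)
  finally have s0: "(\<Sum>v\<in>B \<union> D. c v *s v) = 0" by simp
  have "\<forall>v\<in>B. c v = 0"
  proof
    fix v assume "v \<in> B"
    then show "c v = 0"
      using C(1) s0 BD fB unfolding independent_explicit_module
      by (metis UnI1 finite_UnI le_sup_iff)
  qed
  then have "\<forall>v\<in>B. u v = 0" by (auto simp: c_def)
  then show ?thesis unfolding u by simp
qed
end

context vector_space_pair begin
lemma rank_nullity:
  assumes lf: "Vector_Spaces.linear s1 s2 f" and V: "vs1.subspace V" and W: "finite W" "V \<subseteq> vs1.span W"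
  shows "vs1.dim V = vs1.dim {v\<in>V. f v = 0} + vs2.dim (f ` V)"
proof -
  let ?K = "{v\<in>V. f v = 0}"
  obtain B where B: "B \<subseteq> ?K" "vs1.independent B" "?K \<subseteq> vs1.span B"
    using vs1.maximal_independent_subset[of ?K] by blast
  obtain C where C: "vs1.independent C" "C \<subseteq> V" "B \<subseteq> C" "V \<subseteq> vs1.span C"
    using vs1.maximal_independent_subset_extend[of B V] B by (metis (no_types, lifting) mem_Collect_eq subset_iff)
  have finC: "finite C" using vs1.independent_span_bound[OF W(1) C(1)] C(2) W(2) by auto
  have finB: "finite B" using finC C(3) finite_subset by blast
  have spV: "vs1.span V = V" using V vs1.span_eq_iff by blast
  have dV: "vs1.dim V = card C"
  proof (rule vs1.dim_eq_card)
    show "vs1.span C = vs1.span V" unfolding spV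
      using C(2,4) vs1.span_minimal[OF C(2) V] by blast
  qed (use C in auto)
  have dK: "vs1.dim ?K = card B"
  proof (rule vs1.dim_eq_card)
    show "vs1.span B = vs1.span ?K"
      using B(1,3) vs1.span_mono vs1.span_superset by (metis subset_antisym vs1.span_span)
  qed (use B in auto)
  define D where "D = C - B"
  have spC: "vs1.span C = V" using C spV vs1.span_mono vs1.span_superset
    by (metis subset_antisym vs1.span_minimal V)
  have sp: "vs2.span (f ` V) = vs2.span (f ` D)"
  proof -
    have "vs2.span (f ` V) = f ` vs1.span V" by (rule linear_span_image[OF lf])
    also have "\<dots> = f ` vs1.span C" by (metis spV spC)
    also have "\<dots> = vs2.span (f ` C)" by (rule linear_span_image[OF lf, symmetric])
    also have "\<dots> = vs2.span (f ` D)"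
    proof -
      have "f ` C \<subseteq> vs2.span (f ` D)"
      proof
        fix y assume "y \<in> f ` C"
        then obtain c where c: "c \<in> C" "y = f c" by blast
        show "y \<in> vs2.span (f ` D)"
        proof (cases "c \<in> B")
          case True then have "y = 0" using B c by auto
          then show ?thesis by (simp add: vs2.span_zero)
        next
          case False then show ?thesis using c by (auto simp: D_def intro: vs2.span_base)
        qed
      qed
      moreover have "f ` D \<subseteq> vs2.span (f ` C)" using vs2.span_superset D_def by blast
      ultimately show ?thesis by (simp add: vs2.span_eq)
    qed
    finally show ?thesis .
  qed
  have inj: "inj_on f (vs1.span D)"
  proof (subst linear_inj_on_iff_eq_0[OF lf vs1.subspace_span], intro ballI impI)
    fix x assume x: "x \<in> vs1.span D" "f x = 0"
    have "x \<in> V" using x(1) vs1.span_mono[of D C] spC D_def by auto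
    then have "x \<in> vs1.span B" using x B by auto
    then show "x = 0"
      using vs1.disjoint_span_zero[OF C(1) finC C(3), of D x] x D_def by auto
  qed
  have indD: "vs1.independent D" using C(1) vs1.independent_mono D_def by blast
  have indfD: "vs2.independent (f ` D)"
    by (rule linear_independent_injective_image[OF lf indD inj])
  have "vs2.dim (f ` V) = card (f ` D)"
    by (rule vs2.dim_eq_card[OF sp[symmetric] indfD])
  also have "\<dots> = card D"
    using inj vs1.span_superset by (meson card_image inj_on_subset)
  also have "\<dots> = card C - card B" using D_def finB C(3) card_Diff_subset by blast
  finally show ?thesis using dV dK card_mono[OF finC C(3)] by simp
qed
end




abbreviation lk :: "('a \<Rightarrow>\<^sub>0 'b::zero) \<Rightarrow> 'a \<Rightarrow> 'b" where "lk \<equiv> Poly_Mapping.lookup"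

lemma lookup_single_mult:
  fixes p :: "('a::cancel_comm_monoid_add \<Rightarrow>\<^sub>0 'b::semiring_0)"
  shows "lk (Poly_Mapping.single g c * p) a = (if \<exists>q. a = g + q then c * lk p (a - g) else 0)"
proof -
  have "lk (Poly_Mapping.single g c * p) a = (\<Sum>q. c * lk p q when a = g + q)"
    by (simp add: lookup_mult lookup_single when_mult Sum_any_right_distrib mult_when)
  also have "\<dots> = (if \<exists>q. a = g + q then c * lk p (a - g) else 0)"
  proof (cases "\<exists>q. a = g + q")
    case True
    then obtain q0 where q0: "a = g + q0" by blast
    have "(\<Sum>q. c * lk p q when a = g + q) = (\<Sum>q. c * lk p q when q0 = q)"
      by (rule Sum_any.cong) (auto simp: q0)
    then show ?thesis using True q0 by simp
  next
    case False then show ?thesis by (simp add: when_def)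
  qed
  finally show ?thesis .
qed

lemma sum_fun_apply: "(\<Sum>h\<in>A. f h) x = (\<Sum>h\<in>A. f h x)"
  by (induction A rule: infinite_finite_induct) auto

lemma mdeg_superset:
  assumes "finite A" "Poly_Mapping.keys m \<subseteq> A"
  shows "mdeg m = (\<Sum>i\<in>A. lk m i)"
  unfolding mdeg_def by (rule sum.mono_neutral_left) (use assms in \<open>auto simp: in_keys_iff\<close>)

lemma mdeg_add [simp]: "mdeg (a + b) = mdeg a + mdeg b"
proof -
  let ?A = "Poly_Mapping.keys a \<union> Poly_Mapping.keys b"
  have "mdeg (a + b) = (\<Sum>i\<in>?A. lk (a + b) i)"
    by (rule mdeg_superset) (use keys_add[of a b] in auto)
  also have "\<dots> = (\<Sum>i\<in>?A. lk a i) + (\<Sum>i\<in>?A. lk b i)"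
    by (simp add: lookup_add sum.distrib)
  also have "\<dots> = mdeg a + mdeg b"
    using mdeg_superset[of ?A a] mdeg_superset[of ?A b] by simp
  finally show ?thesis .
qed

lemma mdeg_single [simp]: "mdeg (Poly_Mapping.single i k) = k"
  unfolding mdeg_def by simp

lemma mdeg_zero [simp]: "mdeg 0 = 0"
  unfolding mdeg_def by simp

lemma mdeg_eq_0: "mdeg m = 0 \<longleftrightarrow> m = 0"
  unfolding mdeg_def by (auto simp: in_keys_iff intro: poly_mapping_eqI)

lemma lookup_le_mdeg: "lk m i \<le> mdeg m"
proof (cases "i \<in> Poly_Mapping.keys m")
  case True then show ?thesis unfolding mdeg_def
    by (metis finite_keys member_le_sum zero_le)
qed (simp add: in_keys_iff)

lemma expand_poly: "p = (\<Sum>m\<in>Poly_Mapping.keys p. Poly_Mapping.single m (lk p m))"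
proof (rule poly_mapping_eqI)
  fix k
  have "lk (\<Sum>m\<in>Poly_Mapping.keys p. Poly_Mapping.single m (lk p m)) k
     = (\<Sum>m\<in>Poly_Mapping.keys p. if m = k then lk p m else 0)"
    unfolding lookup_sum lookup_single when_def by (rule sum.cong) auto
  also have "\<dots> = lk p k" by (simp add: sum.delta in_keys_iff)
  finally show "lk p k = lk (\<Sum>m\<in>Poly_Mapping.keys p. Poly_Mapping.single m (lk p m)) k" by simp
qed

lemma pscale_single: "pscale c (Poly_Mapping.single m 1) = Poly_Mapping.single m c"
  by (rule poly_mapping_eqI) (simp add: lookup_single when_def)

lemma expand_poly_pscale: "p = (\<Sum>m\<in>Poly_Mapping.keys p. pscale (lk p m) (Poly_Mapping.single m 1))"
  unfolding pscale_single by (rule expand_poly)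

definition mons :: "nat \<Rightarrow> nat \<Rightarrow> (nat \<Rightarrow>\<^sub>0 nat) set" where
  "mons r i = {b. Poly_Mapping.keys b \<subseteq> {..<r} \<and> mdeg b = i}"

lemma finite_mons: "finite (mons r i)"
proof -
  let ?F = "{f. \<forall>x. (x \<in> {..<r} \<longrightarrow> f x \<in> {..i}) \<and> (x \<notin> {..<r} \<longrightarrow> f x = (0::nat))}"
  have "finite ?F" by (rule finite_set_of_finite_funs) auto
  moreover have "mons r i \<subseteq> Abs_poly_mapping ` ?F"
  proof
    fix b assume b: "b \<in> mons r i"
    have k: "Poly_Mapping.keys b \<subseteq> {..<r}" and m: "mdeg b = i" using b by (auto simp: mons_def)
    have "lk b x = 0" if "x \<notin> {..<r}" for x
      using k that by (metis in_keys_iff subsetD)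
    moreover have "lk b x \<in> {..i}" for x using lookup_le_mdeg[of b x] m by simp
    ultimately have "lk b \<in> ?F" by blast
    then show "b \<in> Abs_poly_mapping ` ?F" by (rule image_eqI[rotated]) simp
  qed
  ultimately show ?thesis using finite_subset finite_imageI by blast
qed




definition ev :: "(nat \<Rightarrow>\<^sub>0 nat) set \<Rightarrow> (nat \<Rightarrow>\<^sub>0 nat) \<Rightarrow> 'k::field mpoly \<Rightarrow> 'k" where
  "ev S g p = (\<Sum>a\<in>S. lk (Poly_Mapping.single g 1 * p) a)"

definition annS :: "nat \<Rightarrow> (nat \<Rightarrow>\<^sub>0 nat) set \<Rightarrow> 'k::field mpoly set" where
  "annS r S = {p \<in> polyring r. \<forall>g. Poly_Mapping.keys g \<subseteq> {..<r} \<longrightarrow> ev S g p = 0}"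

lemma ev_add: "ev S g (p + q) = ev S g p + ev S g q"
  unfolding ev_def by (simp add: distrib_left lookup_add sum.distrib)

lemma ev_zero [simp]: "ev S g 0 = 0"
  unfolding ev_def by simp

lemma ev_sum: "ev S g (\<Sum>m\<in>A. f m) = (\<Sum>m\<in>A. ev S g (f m))"
  by (induction A rule: infinite_finite_induct) (auto simp: ev_add)

lemma ev_single_mult: "ev S g (Poly_Mapping.single m c * p) = c * ev S (g + m) p"
proof -
  have e: "Poly_Mapping.single g 1 * (Poly_Mapping.single m c * p) = Poly_Mapping.single (g + m) c * p"
    by (simp add: mult.assoc[symmetric] mult_single)
  show ?thesis unfolding ev_def e sum_distrib_left
    by (rule sum.cong) (auto simp: lookup_single_mult)
qed

lemma ev_mult: "ev S g (q * p) = (\<Sum>m\<in>Poly_Mapping.keys q. lk q m * ev S (g + m) p)"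
proof -
  have "q * p = (\<Sum>m\<in>Poly_Mapping.keys q. Poly_Mapping.single m (lk q m) * p)"
    by (subst expand_poly) (simp add: sum_distrib_right)
  then show ?thesis by (simp add: ev_sum ev_single_mult)
qed

lemma ev_pscale: "ev S g (pscale c p) = c * ev S g p"
proof -
  have "pscale c p = Poly_Mapping.single 0 c * p"
    unfolding pscale_def by (rule mult_map_scale_conv_mult)
  then show ?thesis by (simp add: ev_single_mult)
qed

lemma polyring_iff: "p \<in> polyring r \<longleftrightarrow> (\<forall>m\<in>Poly_Mapping.keys p. Poly_Mapping.keys m \<subseteq> {..<r})"
  unfolding polyring_def by simp

lemma polyring_add: "p \<in> polyring r \<Longrightarrow> q \<in> polyring r \<Longrightarrow> p + q \<in> polyring r"
  unfolding polyring_iff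
proof (intro impI ballI)
  fix m assume "\<forall>m\<in>Poly_Mapping.keys p. Poly_Mapping.keys m \<subseteq> {..<r}"
    "\<forall>m\<in>Poly_Mapping.keys q. Poly_Mapping.keys m \<subseteq> {..<r}" "m \<in> Poly_Mapping.keys (p + q)"
  moreover have "m \<in> Poly_Mapping.keys p \<union> Poly_Mapping.keys q" using keys_add calculation(3) by fast
  ultimately show "Poly_Mapping.keys m \<subseteq> {..<r}" by blast
qed

lemma keys_add_nat: "Poly_Mapping.keys (a + b :: 'a \<Rightarrow>\<^sub>0 nat) = Poly_Mapping.keys a \<union> Poly_Mapping.keys b"
  by (auto simp: in_keys_iff lookup_add)

lemma polyring_mult: "p \<in> polyring r \<Longrightarrow> q \<in> polyring r \<Longrightarrow> p * q \<in> polyring r"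
  unfolding polyring_iff using keys_mult[of p q] by (fastforce simp: keys_add_nat)

lemma polyring_single: "Poly_Mapping.keys m \<subseteq> {..<r} \<Longrightarrow> Poly_Mapping.single m c \<in> polyring r"
  unfolding polyring_iff by simp

lemma polyring_zero: "0 \<in> polyring r"
  unfolding polyring_iff by simp

lemma annS_ideal: "is_ideal r (annS r S :: 'k::field mpoly set)"
  unfolding is_ideal_def
proof (intro conjI ballI)
  show "annS r S \<subseteq> polyring r" by (auto simp: annS_def)
  show "0 \<in> annS r S" by (auto simp: annS_def polyring_zero)
  fix p q :: "'k mpoly" assume "p \<in> annS r S" "q \<in> annS r S"
  then show "p + q \<in> annS r S" by (auto simp: annS_def ev_add polyring_add)
next
  fix f p :: "'k mpoly" assume f: "f \<in> polyring r" and p: "p \<in> annS r S"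
  have "ev S g (f * p) = 0" if g: "Poly_Mapping.keys g \<subseteq> {..<r}" for g
  proof -
    have "ev S (g + m) p = 0" if m: "m \<in> Poly_Mapping.keys f" for m
    proof -
      have "Poly_Mapping.keys (g + m) \<subseteq> {..<r}" using f m g by (auto simp: keys_add_nat polyring_iff)
      then show ?thesis using p by (auto simp: annS_def)
    qed
    then show ?thesis by (simp add: ev_mult)
  qed
  then show "f * p \<in> annS r S" using f p by (auto simp: annS_def polyring_mult)
qed

lemma lookup_hpart: "lk (hpart i p) b = (if mdeg b = i then lk p b else 0)"
proof -
  have "lk (hpart i p) b = (\<Sum>m\<in>{m\<in>Poly_Mapping.keys p. mdeg m = i}. if m = b then lk p m else 0)"
    unfolding hpart_def lookup_sum lookup_single when_def by (rule sum.cong) auto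
  also have "\<dots> = (if mdeg b = i then lk p b else 0)" by (simp add: sum.delta in_keys_iff)
  finally show ?thesis .
qed

lemma keys_hpart: "Poly_Mapping.keys (hpart i p) \<subseteq> Poly_Mapping.keys p"
  by (auto simp: in_keys_iff lookup_hpart split: if_splits)

lemma ev_hpart:
  assumes S: "S \<subseteq> mons r d"
  shows "ev S g (hpart i p) = (if mdeg g + i = d then ev S g p else 0)"
proof -
  have "lk (Poly_Mapping.single g 1 * hpart i p) a =
        (if mdeg g + i = d then lk (Poly_Mapping.single g 1 * p) a else 0)" if a: "a \<in> S" for a
  proof (cases "\<exists>q. a = g + q")
    case True
    then obtain q where q: "a = g + q" by blast
    have "mdeg a = d" using S a by (auto simp: mons_def)
    then have "mdeg (a - g) = i \<longleftrightarrow> mdeg g + i = d" using q by auto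
    then show ?thesis using True by (simp add: lookup_single_mult lookup_hpart)
  next
    case False then show ?thesis by (simp add: lookup_single_mult)
  qed
  then show ?thesis unfolding ev_def by (auto intro: sum.neutral)
qed




definition phi :: "nat \<Rightarrow> (nat \<Rightarrow>\<^sub>0 nat) set \<Rightarrow> 'k::field mpoly \<Rightarrow> ((nat \<Rightarrow>\<^sub>0 nat) \<Rightarrow> 'k)" where
  "phi r S p = (\<lambda>g. if Poly_Mapping.keys g \<subseteq> {..<r} then ev S g p else 0)"

definition Tset :: "nat \<Rightarrow> (nat \<Rightarrow>\<^sub>0 nat) set \<Rightarrow> (nat \<Rightarrow>\<^sub>0 nat) \<Rightarrow> (nat \<Rightarrow>\<^sub>0 nat) set" where
  "Tset r S b = {g. Poly_Mapping.keys g \<subseteq> {..<r} \<and> g + b \<in> S}"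

definition ind :: "'a set \<Rightarrow> 'a \<Rightarrow> 'k::field" where
  "ind T = (\<lambda>g. if g \<in> T then 1 else 0)"

lemma phi_linear: "Vector_Spaces.linear pscale fscale (phi r S :: 'k::field mpoly \<Rightarrow> _)"
  unfolding Vector_Spaces.linear_iff
  by (auto simp: P.vector_space_axioms Fs.vector_space_axioms phi_def ev_add ev_pscale fscale_def fun_eq_iff)

lemma ev_single: assumes "finite S" shows "ev S g (Poly_Mapping.single b (1::'k::field)) = (if g + b \<in> S then 1 else 0)"
proof -
  have "ev S g (Poly_Mapping.single b (1::'k)) = (\<Sum>a\<in>S. if g + b = a then 1 else 0)"
    unfolding ev_def mult_single by (simp add: lookup_single when_def)
  also have "\<dots> = (if g + b \<in> S then 1 else 0)"
    using assms by (simp add: sum.delta')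
  finally show ?thesis .
qed

lemma phi_single: "finite S \<Longrightarrow> phi r S (Poly_Mapping.single b (1::'k::field)) = ind (Tset r S b)"
  by (auto simp: phi_def ind_def Tset_def ev_single fun_eq_iff)

lemma hom_comp_subspace: "P.subspace (hom_comp r i :: 'k::field mpoly set)"
  unfolding P.subspace_def
proof (intro conjI ballI allI)
  show "0 \<in> (hom_comp r i :: 'k mpoly set)" by (simp add: hom_comp_def polyring_zero)
  fix x y :: "'k mpoly" assume x: "x \<in> hom_comp r i" and y: "y \<in> hom_comp r i"
  show "x + y \<in> hom_comp r i" unfolding hom_comp_def
  proof (intro CollectI conjI ballI)
    show "x + y \<in> polyring r" using x y by (simp add: hom_comp_def polyring_add)
    fix m assume "m \<in> Poly_Mapping.keys (x + y)"
    then have "m \<in> Poly_Mapping.keys x \<union> Poly_Mapping.keys y" using keys_add by fast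
    then show "mdeg m = i" using x y by (auto simp: hom_comp_def)
  qed
next
  fix c :: 'k and x :: "'k mpoly" assume x: "x \<in> hom_comp r i"
  have k: "Poly_Mapping.keys (pscale c x) \<subseteq> Poly_Mapping.keys x"
    by (auto simp: in_keys_iff)
  then show "pscale c x \<in> hom_comp r i" using x unfolding hom_comp_def polyring_iff by blast
qed

lemma hom_comp_span:
  "(hom_comp r i :: 'k::field mpoly set) \<subseteq> P.span ((\<lambda>b. Poly_Mapping.single b 1) ` mons r i)"
proof
  fix p :: "'k mpoly" assume p: "p \<in> hom_comp r i"
  have "(\<Sum>m\<in>Poly_Mapping.keys p. pscale (lk p m) (Poly_Mapping.single m 1))
      \<in> P.span ((\<lambda>b. Poly_Mapping.single b 1) ` mons r i)"
  proof (rule P.span_sum, rule P.span_scale, rule P.span_base)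
    fix m assume "m \<in> Poly_Mapping.keys p"
    then have "m \<in> mons r i" using p by (auto simp: hom_comp_def polyring_iff mons_def)
    then show "Poly_Mapping.single m 1 \<in> (\<lambda>b. Poly_Mapping.single b 1) ` mons r i" by blast
  qed
  then show "p \<in> P.span ((\<lambda>b. Poly_Mapping.single b 1) ` mons r i)"
    using expand_poly_pscale[of p] by simp
qed

lemma mons_in_hom_comp:
  "((\<lambda>b. Poly_Mapping.single b 1) ` mons r i) \<subseteq> (hom_comp r i :: 'k::field mpoly set)"
  by (auto simp: hom_comp_def mons_def polyring_iff)

lemma dim_ind:
  assumes fin: "finite TT" and disj: "\<forall>T\<in>TT. \<forall>T'\<in>TT. T = T' \<or> T \<inter> T' = {}"
  shows "Fs.dim ((ind :: _ \<Rightarrow> _ \<Rightarrow> 'k::field) ` TT) = card (TT - {{}})"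
proof -
  let ?G = "(ind :: _ \<Rightarrow> _ \<Rightarrow> 'k) ` (TT - {{}})"
  have indinj: "inj (ind :: _ \<Rightarrow> _ \<Rightarrow> 'k)"
  proof (rule injI)
    fix T T' assume "(ind T :: _ \<Rightarrow> 'k) = ind T'"
    then have "\<forall>x. (x \<in> T) = (x \<in> T')" by (metis ind_def one_neq_zero)
    then show "T = T'" by blast
  qed
  have ind0: "ind {} = (0 :: _ \<Rightarrow> 'k)" by (simp add: ind_def fun_eq_iff)
  have sp: "Fs.span ((ind :: _ \<Rightarrow> _ \<Rightarrow> 'k) ` TT) = Fs.span ?G"
  proof -
    have "(ind :: _ \<Rightarrow> _ \<Rightarrow> 'k) ` TT \<subseteq> insert 0 ?G" using ind0 by auto
    then have "Fs.span ((ind :: _ \<Rightarrow> _ \<Rightarrow> 'k) ` TT) \<subseteq> Fs.span ?G"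
      using Fs.span_mono Fs.span_insert_0 by metis
    moreover have "Fs.span ?G \<subseteq> Fs.span ((ind :: _ \<Rightarrow> _ \<Rightarrow> 'k) ` TT)"
      by (rule Fs.span_mono) auto
    ultimately show ?thesis by blast
  qed
  have finG: "finite ?G" using fin by simp
  have indep: "Fs.independent ?G"
  proof
    assume "Fs.dependent ?G"
    then obtain u where u: "\<exists>v\<in>?G. u v \<noteq> 0" "(\<Sum>v\<in>?G. fscale (u v) v) = 0"
      using Fs.dependent_finite[OF finG] by blast
    obtain v where v: "v \<in> ?G" "u v \<noteq> 0" using u by blast
    then obtain T where T: "T \<in> TT" "T \<noteq> {}" "v = ind T" by blast
    then obtain x where x: "x \<in> T" by blast
    have "0 = (\<Sum>w\<in>?G. fscale (u w) w) x" using u by simp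
    also have "\<dots> = (\<Sum>w\<in>?G. u w * w x)" by (simp add: sum_fun_apply fscale_def)
    also have "\<dots> = u v * v x + (\<Sum>w\<in>?G - {v}. u w * w x)"
      by (rule sum.remove[OF finG v(1)])
    also have "(\<Sum>w\<in>?G - {v}. u w * w x) = 0"
    proof (rule sum.neutral, rule ballI)
      fix w assume w: "w \<in> ?G - {v}"
      then obtain T' where T': "T' \<in> TT" "w = ind T'" by blast
      then have "T' \<noteq> T" using w T by auto
      then have "x \<notin> T'" using disj T T' x by blast
      then show "u w * w x = 0" using T' by (simp add: ind_def)
    qed
    finally show False using v T x by (simp add: ind_def)
  qed
  have "Fs.dim ((ind :: _ \<Rightarrow> _ \<Rightarrow> 'k) ` TT) = Fs.dim ?G" using sp Fs.span_eq_dim by blast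
  also have "\<dots> = card ?G" using indep Fs.dim_eq_card_independent by blast
  also have "\<dots> = card (TT - {{}})" using indinj card_image inj_on_subset by (metis subset_UNIV)
  finally show ?thesis .
qed

lemma hilb_formula:
  assumes finS: "finite S" and disj: "\<forall>b\<in>mons r i. \<forall>b'\<in>mons r i. Tset r S b = Tset r S b' \<or> Tset r S b \<inter> Tset r S b' = {}"
  shows "hilb r (annS r S :: 'k::field mpoly set) i = card (Tset r S ` mons r i - {{}})"
proof -
  let ?V = "hom_comp r i :: 'k mpoly set"
  let ?W = "(\<lambda>b. Poly_Mapping.single b (1::'k)) ` mons r i"
  let ?phi = "phi r S :: 'k mpoly \<Rightarrow> _"
  have rn: "P.dim ?V = P.dim {v\<in>?V. ?phi v = 0} + Fs.dim (?phi ` ?V)"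
    by (rule PF.rank_nullity[OF phi_linear hom_comp_subspace _ hom_comp_span]) (simp add: finite_mons)
  have ker: "{v\<in>?V. ?phi v = 0} = ?V \<inter> annS r S"
    by (auto simp: phi_def annS_def hom_comp_def fun_eq_iff)
  have w: "?W \<subseteq> P.span ?V" using mons_in_hom_comp[of r i] P.span_superset[of ?V] by (rule subset_trans)
  have "P.span ?V = P.span ?W" unfolding P.span_eq by (intro conjI hom_comp_span w)
  then have "Fs.span (?phi ` ?V) = Fs.span (?phi ` ?W)"
    by (simp add: PF.linear_span_image[OF phi_linear])
  then have "Fs.dim (?phi ` ?V) = Fs.dim (?phi ` ?W)" by (rule Fs.span_eq_dim)
  also have "?phi ` ?W = (ind :: _ \<Rightarrow> _ \<Rightarrow> 'k) ` (Tset r S ` mons r i)"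
    by (auto simp: phi_single[OF finS] image_image)
  also have "Fs.dim \<dots> = card (Tset r S ` mons r i - {{}})"
    by (rule dim_ind) (use disj finite_mons in auto)
  finally have "Fs.dim (?phi ` ?V) = card (Tset r S ` mons r i - {{}})" .
  then show ?thesis using rn ker unfolding hilb_def pdim_def by simp
qed




lemma var_polyring: "j < r \<Longrightarrow> var j \<in> polyring r"
  unfolding var_def by (rule polyring_single) simp

lemma annS_homogeneous:
  assumes S: "S \<subseteq> mons r d"
  shows "homogeneous_ideal r (annS r S :: 'k::field mpoly set)"
  unfolding homogeneous_ideal_def
proof (intro conjI annS_ideal ballI allI)
  fix p :: "'k mpoly" and i assume p: "p \<in> annS r S"
  have "hpart i p \<in> polyring r"
    using p keys_hpart[of i p] by (auto simp: annS_def polyring_iff)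
  moreover have "ev S g (hpart i p) = 0" if "Poly_Mapping.keys g \<subseteq> {..<r}" for g
    using p that by (simp add: ev_hpart[OF S] annS_def)
  ultimately show "hpart i p \<in> annS r S" by (simp add: annS_def)
qed

lemma hom_comp_high:
  assumes S: "S \<subseteq> mons r d" and i: "d < i"
  shows "(hom_comp r i :: 'k::field mpoly set) \<subseteq> annS r S"
proof
  fix p :: "'k mpoly" assume p: "p \<in> hom_comp r i"
  have "ev S g p = 0" for g
    unfolding ev_def
  proof (rule sum.neutral, rule ballI)
    fix a assume a: "a \<in> S"
    show "lk (Poly_Mapping.single g 1 * p) a = 0"
    proof (cases "\<exists>q. a = g + q")
      case True
      then obtain q where q: "a = g + q" by blast
      have "mdeg a = d" using a S by (auto simp: mons_def)
      then have "mdeg q \<noteq> i" using q i by simp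
      then have "lk p q = 0" using p by (auto simp: hom_comp_def in_keys_iff)
      then show ?thesis using q by (simp add: lookup_single_mult)
    qed (simp add: lookup_single_mult)
  qed
  then show "p \<in> annS r S" using p by (simp add: annS_def hom_comp_def)
qed

lemma socle_low:
  assumes S: "S \<subseteq> mons r d" and i: "i < d" and p: "p \<in> hom_comp r i"
    and v: "\<forall>j<r. var j * p \<in> annS r S"
  shows "(p :: 'k::field mpoly) \<in> annS r S"
proof -
  have "ev S g p = 0" if g: "Poly_Mapping.keys g \<subseteq> {..<r}" for g
  proof (cases "g = 0")
    case True
    have "ev S g p = (\<Sum>a\<in>S. lk p a)" unfolding ev_def True by simp
    also have "\<dots> = 0"
    proof (rule sum.neutral, rule ballI)
      fix a assume a: "a \<in> S"
      then have "mdeg a = d" using S by (auto simp: mons_def)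
      then show "lk p a = 0" using p i by (auto simp: hom_comp_def in_keys_iff)
    qed
    finally show ?thesis .
  next
    case False
    then obtain j where j: "j \<in> Poly_Mapping.keys g"
      by (metis all_not_in_conv keys_eq_empty)
    define g' where "g' = g - Poly_Mapping.single j 1"
    have gg: "g' + Poly_Mapping.single j 1 = g"
    proof (rule poly_mapping_eqI)
      fix k show "lk (g' + Poly_Mapping.single j 1) k = lk g k"
        using j by (cases "k = j") (auto simp: g'_def lookup_add lookup_minus lookup_single in_keys_iff)
    qed
    have "Poly_Mapping.keys g' \<subseteq> Poly_Mapping.keys g"
      unfolding g'_def by (auto simp: in_keys_iff lookup_minus)
    then have "Poly_Mapping.keys g' \<subseteq> {..<r}" using g by blast
    moreover have jr: "j < r" using j g by auto
    ultimately have "ev S g' (var j * p) = 0" using v by (auto simp: annS_def)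
    then show ?thesis using gg by (simp add: var_def ev_single_mult)
  qed
  then show ?thesis using p by (simp add: annS_def hom_comp_def)
qed

lemma var_mult_hom: 
  assumes p: "p \<in> hom_comp r i" and j: "j < r"
  shows "var j * p \<in> hom_comp r (Suc i)"
  unfolding hom_comp_def
proof (intro CollectI conjI ballI)
  show "var j * p \<in> polyring r" using p polyring_mult[OF var_polyring[OF j]] by (auto simp: hom_comp_def)
  fix m assume "m \<in> Poly_Mapping.keys (var j * p)"
  then obtain a b where "m = a + b" "a \<in> Poly_Mapping.keys (var j :: 'a mpoly)" "b \<in> Poly_Mapping.keys p"
    using keys_mult by blast
  then show "mdeg m = Suc i" using p by (auto simp: var_def hom_comp_def)
qed

lemma hilb_top:
  assumes S: "S \<subseteq> mons r d" "finite S" "S \<noteq> {}"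
  shows "hilb r (annS r S :: 'k::field mpoly set) d = 1"
proof -
  have T: "Tset r S b = (if b \<in> S then {0} else {})" if b: "b \<in> mons r d" for b
  proof -
    have "g = 0" if "g + b \<in> S" for g
    proof -
      have "mdeg (g + b) = d" using that S by (auto simp: mons_def)
      then have "mdeg g = 0" using b by (simp add: mons_def)
      then show ?thesis by (simp add: mdeg_eq_0)
    qed
    then show ?thesis by (auto simp: Tset_def) (metis add.left_neutral)
  qed
  have "Tset r S ` mons r d - {{}} = {{0}}"
  proof
    show "Tset r S ` mons r d - {{}} \<subseteq> {{0}}" using T by auto
    obtain s where s: "s \<in> S" using S by blast
    then have "s \<in> mons r d" using S by auto
    then show "{{0}} \<subseteq> Tset r S ` mons r d - {{}}" using T s by (auto intro!: image_eqI[of _ _ s])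
  qed
  moreover have "hilb r (annS r S :: 'k::field mpoly set) d = card (Tset r S ` mons r d - {{}})"
    by (rule hilb_formula) (use S T in auto)
  ultimately show ?thesis by simp
qed

lemma AG_general:
  assumes S: "S \<subseteq> mons r d" "finite S" "S \<noteq> {}"
  shows "AG_algebra r (annS r S :: 'k::field mpoly set) d"
proof -
  let ?I = "annS r S :: 'k mpoly set"
  have low: "hom_comp r i \<inter> socle_lift r ?I = hom_comp r i \<inter> ?I" if "i < d" for i
  proof
    show "hom_comp r i \<inter> socle_lift r ?I \<subseteq> hom_comp r i \<inter> ?I"
      using socle_low[OF S(1) that] by (auto simp: socle_lift_def)
    show "hom_comp r i \<inter> ?I \<subseteq> hom_comp r i \<inter> socle_lift r ?I"
    proof
      fix p assume p: "p \<in> hom_comp r i \<inter> ?I"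
      have "var j * p \<in> ?I" if "j < r" for j
        using annS_ideal[of r S] var_polyring[OF that] p unfolding is_ideal_def by blast
      then show "p \<in> hom_comp r i \<inter> socle_lift r ?I" using p by (auto simp: socle_lift_def hom_comp_def)
    qed
  qed
  have top: "hom_comp r d \<inter> socle_lift r ?I = hom_comp r d"
  proof (intro equalityI subsetI)
    fix p :: "'k mpoly" assume p: "p \<in> hom_comp r d"
    have "var j * p \<in> ?I" if "j < r" for j
      using var_mult_hom[OF p that] hom_comp_high[OF S(1), of "Suc d"] by blast
    then show "p \<in> hom_comp r d \<inter> socle_lift r ?I" using p by (auto simp: socle_lift_def hom_comp_def)
  qed auto
  have "socle_dim r ?I d = (\<Sum>i\<in>insert d {..<d}. pdim (hom_comp r i \<inter> socle_lift r ?I) - pdim (hom_comp r i \<inter> ?I))"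
    unfolding socle_dim_def by (rule sum.cong) auto
  also have "\<dots> = pdim (hom_comp r d \<inter> socle_lift r ?I) - pdim (hom_comp r d \<inter> ?I)"
    by (simp add: low)
  also have "\<dots> = hilb r ?I d" by (simp add: top hilb_def)
  also have "\<dots> = 1" by (rule hilb_top[OF S])
  finally have sd: "socle_dim r ?I d = 1" .
  have h1: "hilb r ?I d = 1" by (rule hilb_top[OF S])
  show ?thesis unfolding AG_algebra_def artinian_socle_degree_def
    using sd h1 annS_homogeneous[OF S(1)] hom_comp_high[OF S(1)] by auto
qed




abbreviation sg :: "nat \<Rightarrow> nat \<Rightarrow> (nat \<Rightarrow>\<^sub>0 nat)" where "sg \<equiv> Poly_Mapping.single"

lemma lk_sg: "lk (sg k n) v = (if k = v then n else 0)"
  by (simp add: lookup_single when_def)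

lemma mdeg3: assumes "Poly_Mapping.keys a \<subseteq> {..<3}" shows "mdeg a = lk a 0 + lk a 1 + lk a 2"
proof -
  have "Poly_Mapping.keys a \<subseteq> {0,1,2}" using assms by auto
  then have "mdeg a = (\<Sum>i\<in>{0,1,2}. lk a i)" by (rule mdeg_superset[rotated]) simp
  then show ?thesis by simp
qed

lemma keys_sub_iff: "Poly_Mapping.keys a \<subseteq> A \<longleftrightarrow> (\<forall>v. v \<notin> A \<longrightarrow> lk a v = 0)"
  by (auto simp: in_keys_iff)

locale conc =
  fixes d r :: nat
  assumes d2: "2 \<le> d" and rbig: "3 + d * d \<le> r"
begin

definition X :: "nat \<Rightarrow> (nat \<Rightarrow>\<^sub>0 nat) set" where "X k = mons 3 k"
definition idx :: "(nat \<Rightarrow>\<^sub>0 nat) \<Rightarrow> nat" where "idx a = 3 + lk a 0 * d + lk a 1"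
definition Y :: "nat set" where "Y = idx ` X (d - 1)"
definition Z :: "nat set" where "Z = {3..<r} - Y"
definition S :: "(nat \<Rightarrow>\<^sub>0 nat) set" where
  "S = (\<lambda>a. a + sg (idx a) 1) ` X (d - 1) \<union> (\<lambda>k. sg k d) ` Z"

lemma X_lk: "a \<in> X k \<Longrightarrow> 3 \<le> v \<Longrightarrow> lk a v = 0"
  unfolding X_def mons_def keys_sub_iff by auto

lemma X_mdeg: "a \<in> X k \<Longrightarrow> lk a 0 + lk a 1 + lk a 2 = k"
  unfolding X_def mons_def using mdeg3 by auto

lemma X_eqI:
  assumes "a \<in> X k" "b \<in> X k" "lk a 0 = lk b 0" "lk a 1 = lk b 1"
  shows "a = b"
proof (rule poly_mapping_eqI)
  fix v
  have "lk a 2 = lk b 2" using X_mdeg[OF assms(1)] X_mdeg[OF assms(2)] assms(3,4) by simp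
  then show "lk a v = lk b v"
    using assms X_lk[OF assms(1), of v] X_lk[OF assms(2), of v]
    by (cases "v < 3") (auto simp: less_Suc_eq numeral_3_eq_3 numeral_2_eq_2)
qed

lemma X_mem: "a \<in> X k \<longleftrightarrow> (\<forall>v. 3 \<le> v \<longrightarrow> lk a v = 0) \<and> mdeg a = k"
  unfolding X_def mons_def keys_sub_iff by auto

lemma idx_bounds: assumes a: "a \<in> X (d - 1)" shows "3 \<le> idx a" "idx a < r"
proof -
  have m: "mdeg a = d - 1" using a by (simp add: X_mem)
  have "lk a 0 \<le> d - 1" "lk a 1 \<le> d - 1" using lookup_le_mdeg[of a] m by metis+
  then have "lk a 0 + 1 \<le> d" "lk a 1 < d" using d2 by auto
  then have "(lk a 0 + 1) * d \<le> d * d" by (intro mult_le_mono1) simp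
  then have "lk a 0 * d + lk a 1 < d * d" using \<open>lk a 1 < d\<close> by (simp add: algebra_simps)
  then show "idx a < r" using rbig by (simp add: idx_def)
  show "3 \<le> idx a" by (simp add: idx_def)
qed

lemma idx_inj: "inj_on idx (X (d - 1))"
proof (rule inj_onI)
  fix a b assume a: "a \<in> X (d - 1)" and b: "b \<in> X (d - 1)" and e: "idx a = idx b"
  have "lk a 1 \<le> d - 1" "lk b 1 \<le> d - 1"
    using lookup_le_mdeg[of a] lookup_le_mdeg[of b] a b by (metis X_mem)+
  then have lt: "lk a 1 < d" "lk b 1 < d" using d2 by auto
  have e2: "lk a 0 * d + lk a 1 = lk b 0 * d + lk b 1" using e by (simp add: idx_def)
  have "(lk a 0 * d + lk a 1) div d = lk a 0" "(lk b 0 * d + lk b 1) div d = lk b 0"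
    using lt d2 by simp_all
  then have "lk a 0 = lk b 0" using e2 by metis
  moreover then have "lk a 1 = lk b 1" using e2 by simp
  ultimately show "a = b" using X_eqI a b by blast
qed

lemma YZ: "Y \<inter> Z = {}" "Z \<subseteq> {3..<r}" "Y \<subseteq> {3..<r}"
  using idx_bounds by (auto simp: Y_def Z_def)

lemma finite_X: "finite (X k)" by (simp add: X_def finite_mons)

lemma card_Y: "card Y = card (X (d - 1))"
  unfolding Y_def using idx_inj by (rule card_image)

lemma card_Z: "card Z = r - 3 - card (X (d - 1))"
proof -
  have "card Z = card {3..<r} - card Y"
    unfolding Z_def using YZ by (simp add: card_Diff_subset finite_subset)
  then show ?thesis using card_Y by simp
qed

lemma card_X_le: "card (X (d - 1)) \<le> r - 3"
  using card_Y YZ(3) card_mono[of "{3..<r}" Y] by simp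

lemma S_mons: "S \<subseteq> mons r d"
proof
  fix s assume "s \<in> S"
  then consider (y) a where "a \<in> X (d - 1)" "s = a + sg (idx a) 1" | (z) k where "k \<in> Z" "s = sg k d"
    unfolding S_def by blast
  then show "s \<in> mons r d"
  proof cases
    case y
    have "Poly_Mapping.keys a \<subseteq> {..<3}" using y(1) by (simp add: X_def mons_def)
    then have "Poly_Mapping.keys s \<subseteq> {..<r}" using y idx_bounds[OF y(1)] rbig
      by (auto simp: keys_add_nat)
    moreover have "mdeg s = d" using y d2 by (simp add: X_mem)
    ultimately show ?thesis by (simp add: mons_def)
  next
    case z
    then show ?thesis using YZ d2 by (auto simp: mons_def)
  qed
qed

lemma finite_S: "finite S"
  using YZ by (simp add: S_def finite_X finite_subset)

lemma S_nonempty: "S \<noteq> {}"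
proof -
  have "sg 0 (d - 1) \<in> X (d - 1)" by (simp add: X_def mons_def)
  then show ?thesis by (auto simp: S_def)
qed

lemma S_cases:
  assumes "s \<in> S"
  obtains (y) a where "a \<in> X (d - 1)" "s = a + sg (idx a) 1" | (z) k where "k \<in> Z" "s = sg k d"
  using assms unfolding S_def by blast

lemma lk_y: "a \<in> X (d - 1) \<Longrightarrow> 3 \<le> v \<Longrightarrow> lk (a + sg (idx a) 1) v = (if v = idx a then 1 else 0)"
  by (auto simp: lookup_add lk_sg X_lk)

lemma S_pos: "s \<in> S \<Longrightarrow> \<exists>v\<ge>3. lk s v > 0"
proof (induction rule: S_cases)
  case (y a) then show ?case using idx_bounds[OF y(1)] lk_y[OF y(1)] by auto
next
  case (z k) then show ?case using YZ d2 by (auto simp: lk_sg)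
qed

lemma S_uniq:
  assumes s: "s \<in> S" and t: "t \<in> S" and v: "3 \<le> v" "lk s v > 0" "lk t v > 0"
  shows "s = t"
  using s
proof (cases rule: S_cases)
  case (y a)
  have va: "v = idx a" using lk_y[OF y(1) v(1)] v y by (auto split: if_splits)
  show ?thesis using t
  proof (cases rule: S_cases)
    case (y b)
    have "v = idx b" using lk_y[OF y(1) v(1)] v y by (auto split: if_splits)
    then have "a = b" using idx_inj va \<open>a \<in> X (d - 1)\<close> y(1) by (metis inj_onD)
    then show ?thesis using y \<open>s = a + sg (idx a) 1\<close> by simp
  next
    case (z k)
    then have "v = k" using v by (auto simp: lk_sg split: if_splits)
    then show ?thesis using va z YZ \<open>a \<in> X (d - 1)\<close> by (auto simp: Y_def)
  qed
next
  case (z k)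
  have vk: "v = k" using z v by (auto simp: lk_sg split: if_splits)
  show ?thesis using t
  proof (cases rule: S_cases)
    case (y b)
    have "v = idx b" using lk_y[OF y(1) v(1)] v y by (auto split: if_splits)
    then show ?thesis using vk z YZ y(1) by (auto simp: Y_def)
  next
    case (z k')
    then have "v = k'" using v by (auto simp: lk_sg split: if_splits)
    then show ?thesis using vk z \<open>s = sg k d\<close> by simp
  qed
qed

lemma T_single:
  assumes v: "3 \<le> v" "lk b v > 0" and g: "g \<in> Tset r S b"
  shows "Tset r S b = {g}"
proof -
  have "g' = g" if "g' \<in> Tset r S b" for g'
  proof -
    have "g' + b \<in> S" "g + b \<in> S" using that g by (auto simp: Tset_def)
    moreover have "lk (g' + b) v > 0" "lk (g + b) v > 0" using v by (auto simp: lookup_add)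
    ultimately have "g' + b = g + b" using S_uniq v(1) by blast
    then show ?thesis by simp
  qed
  then show ?thesis using g by blast
qed

end



context conc begin

definition G :: "nat \<Rightarrow> (nat \<Rightarrow>\<^sub>0 nat) + ((nat \<Rightarrow>\<^sub>0 nat) + nat) \<Rightarrow> (nat \<Rightarrow>\<^sub>0 nat) set" where
  "G i x = (case x of Inl b \<Rightarrow> Tset r S b | Inr (Inl g) \<Rightarrow> {g} | Inr (Inr k) \<Rightarrow> {sg k (d - i)})"

definition Dom :: "nat \<Rightarrow> ((nat \<Rightarrow>\<^sub>0 nat) + ((nat \<Rightarrow>\<^sub>0 nat) + nat)) set" where
  "Dom i = X i <+> (X (d - i) <+> Z)"

lemma X_mons: "X k \<subseteq> mons r k"
  using rbig by (auto simp: X_def mons_def)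

lemma X_keys: "a \<in> X k \<Longrightarrow> Poly_Mapping.keys a \<subseteq> {..<r}"
  using X_mons by (auto simp: mons_def)

lemma pure_T_elem:
  assumes b: "b \<in> X i" and g: "g \<in> Tset r S b"
  shows "\<exists>v\<ge>3. lk g v > 0"
proof -
  have "g + b \<in> S" using g by (simp add: Tset_def)
  then obtain v where "v \<ge> 3" "lk (g + b) v > 0" using S_pos by blast
  then show ?thesis using X_lk[OF b] by (auto simp: lookup_add)
qed

lemma Dom_nonempty_in:
  assumes i: "1 \<le> i" "i < d" and x: "x \<in> Dom i"
  shows "G i x \<noteq> {} \<and> G i x \<in> Tset r S ` mons r i"
proof -
  consider (a) b where "x = Inl b" "b \<in> X i" | (b) g0 where "x = Inr (Inl g0)" "g0 \<in> X (d - i)"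
    | (c) k where "x = Inr (Inr k)" "k \<in> Z"
    using x by (auto simp: Dom_def)
  then show ?thesis
  proof cases
    case a
    define a0 where "a0 = b + sg 0 (d - 1 - i)"
    have a0X: "a0 \<in> X (d - 1)" using a(2) i X_lk[OF a(2)] by (auto simp: X_mem a0_def lookup_add lk_sg)
    define g where "g = sg 0 (d - 1 - i) + sg (idx a0) 1"
    have "g + b = a0 + sg (idx a0) 1" by (simp add: g_def a0_def ac_simps)
    then have "g + b \<in> S" using a0X by (auto simp: S_def)
    moreover have "Poly_Mapping.keys g \<subseteq> {..<r}"
      using idx_bounds[OF a0X] rbig by (auto simp: g_def keys_add_nat)
    ultimately have "g \<in> Tset r S b" by (simp add: Tset_def)
    then show ?thesis using a X_mons by (auto simp: G_def)
  next
    case b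
    define a0 where "a0 = g0 + sg 0 (i - 1)"
    have a0X: "a0 \<in> X (d - 1)" using b(2) i X_lk[OF b(2)] by (auto simp: X_mem a0_def lookup_add lk_sg)
    define b0 where "b0 = sg 0 (i - 1) + sg (idx a0) 1"
    have "g0 + b0 = a0 + sg (idx a0) 1" by (simp add: b0_def a0_def ac_simps)
    then have "g0 + b0 \<in> S" using a0X by (auto simp: S_def)
    then have gT: "g0 \<in> Tset r S b0" using X_keys[OF b(2)] by (simp add: Tset_def)
    have "lk b0 (idx a0) > 0" by (simp add: b0_def lookup_add)
    then have T: "Tset r S b0 = {g0}" using T_single[OF idx_bounds(1)[OF a0X] _ gT] by blast
    have "b0 \<in> mons r i" using idx_bounds[OF a0X] i rbig by (auto simp: b0_def mons_def keys_add_nat)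
    then show ?thesis using T b by (auto simp: G_def)
  next
    case c
    define b0 where "b0 = sg k i"
    have "sg k (d - i) + b0 = sg k d" using i by (simp add: b0_def single_add[symmetric])
    then have "sg k (d - i) + b0 \<in> S" using c by (auto simp: S_def)
    then have gT: "sg k (d - i) \<in> Tset r S b0" using c YZ by (auto simp: Tset_def)
    have "lk b0 k > 0" "3 \<le> k" using i c YZ by (auto simp: b0_def)
    then have T: "Tset r S b0 = {sg k (d - i)}" using T_single gT by blast
    have "b0 \<in> mons r i" using c YZ by (auto simp: b0_def mons_def)
    then show ?thesis using T c by (auto simp: G_def)
  qed
qed

lemma Dom_cases:
  assumes "x \<in> Dom i"
  obtains (a) b where "x = Inl b" "b \<in> X i" | (b) g where "x = Inr (Inl g)" "g \<in> X (d - i)"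
    | (c) k where "x = Inr (Inr k)" "k \<in> Z"
  using assms unfolding Dom_def by (elim PlusE) auto

lemma G_disj:
  assumes i: "1 \<le> i" "i < d" and x: "x \<in> Dom i" and y: "y \<in> Dom i" and xy: "x \<noteq> y"
  shows "G i x \<inter> G i y = {}"
proof -
  have AB: "G i (Inl b) \<inter> G i (Inl b') = {}" if bX: "b \<in> X i" "b' \<in> X i" "b \<noteq> b'" for b b'
  proof (rule ccontr)
    assume "G i (Inl b) \<inter> G i (Inl b') \<noteq> {}"
    then obtain g where g: "g \<in> Tset r S b" "g \<in> Tset r S b'" by (auto simp: G_def)
    obtain v where v: "v \<ge> 3" "lk g v > 0" using pure_T_elem[OF bX(1) g(1)] by blast
    have "g + b \<in> S" "g + b' \<in> S" using g by (auto simp: Tset_def)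
    moreover have "lk (g + b) v > 0" "lk (g + b') v > 0" using v by (auto simp: lookup_add)
    ultimately have "g + b = g + b'" using S_uniq v(1) by blast
    then show False using bX by simp
  qed
  have AC: "G i (Inl b) \<inter> G i (Inr (Inl g0)) = {}" if H: "b \<in> X i" "g0 \<in> X (d - i)" for b g0
  proof (rule ccontr)
    assume "G i (Inl b) \<inter> G i (Inr (Inl g0)) \<noteq> {}"
    then have "g0 \<in> Tset r S b" by (auto simp: G_def)
    then obtain v where "v \<ge> 3" "lk g0 v > 0" using pure_T_elem[OF H(1)] by blast
    then show False using X_lk[OF H(2)] by simp
  qed
  have AD: "G i (Inl b) \<inter> G i (Inr (Inr k)) = {}" if H: "b \<in> X i" "k \<in> Z" for b k
  proof (rule ccontr)
    assume "G i (Inl b) \<inter> G i (Inr (Inr k)) \<noteq> {}"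
    then have "sg k (d - i) \<in> Tset r S b" by (auto simp: G_def)
    then have s: "sg k (d - i) + b \<in> S" by (simp add: Tset_def)
    have k3: "3 \<le> k" using H YZ by auto
    show False using s
    proof (cases rule: S_cases)
      case (y a)
      have "k \<noteq> idx a" using H YZ y(1) by (auto simp: Y_def)
      then have "lk (a + sg (idx a) 1) k = 0" using lk_y[OF y(1) k3] by simp
      moreover have "lk (sg k (d - i) + b) k = d - i" using X_lk[OF H(1) k3] by (simp add: lookup_add)
      ultimately show False using y i by simp
    next
      case (z k')
      have k'3: "3 \<le> k'" using z YZ by auto
      have "lk b v = 0" for v
      proof (cases "3 \<le> v")
        case True then show ?thesis using X_lk[OF H(1)] by simp
      next
        case False
        have "lk (sg k (d - i) + b) v = lk (sg k' d) v" using z by simp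
        then show ?thesis using False k3 k'3 by (simp add: lookup_add lk_sg)
      qed
      then have "b = 0" by (intro poly_mapping_eqI) simp
      then show False using H(1) i by (simp add: X_mem)
    qed
  qed
  have BB: "G i (Inr (Inl g)) \<inter> G i (Inr (Inl g')) = {}" if "g \<noteq> g'" for g g'
    using that by (auto simp: G_def)
  have BC: "G i (Inr (Inl g)) \<inter> G i (Inr (Inr k)) = {}" if "g \<in> X (d - i)" "k \<in> Z" for g k
  proof -
    have "3 \<le> k" using that YZ by auto
    then have "lk g k = 0" using X_lk[OF that(1)] by simp
    then have "g \<noteq> sg k (d - i)" using i by auto
    then show ?thesis by (auto simp: G_def)
  qed
  have CC: "G i (Inr (Inr k)) \<inter> G i (Inr (Inr k')) = {}" if "k \<noteq> k'" for k k'
  proof -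
    have "lk (sg k (d - i)) k \<noteq> lk (sg k' (d - i)) k" using that i by (simp add: lk_sg)
    then have "sg k (d - i) \<noteq> sg k' (d - i)" by metis
    then show ?thesis by (auto simp: G_def)
  qed
  show ?thesis
  proof (rule ccontr)
    assume "G i x \<inter> G i y \<noteq> {}"
    then obtain z where z: "z \<in> G i x" "z \<in> G i y" by blast
    show False using x
    proof (cases rule: Dom_cases)
      case (a b)
      show False using y
      proof (cases rule: Dom_cases)
        case (a b') then show False using AB[of b b'] \<open>x = Inl b\<close> \<open>b \<in> X i\<close> xy z by auto
      next
        case (b g') then show False using AC[of b g'] \<open>x = Inl b\<close> \<open>b \<in> X i\<close> z by auto
      next
        case (c k') then show False using AD[of b k'] \<open>x = Inl b\<close> \<open>b \<in> X i\<close> z by auto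
      qed
    next
      case (b g)
      show False using y
      proof (cases rule: Dom_cases)
        case (a b') then show False using AC[of b' g] \<open>x = Inr (Inl g)\<close> \<open>g \<in> X (d - i)\<close> z by auto
      next
        case (b g') then show False using BB[of g g'] \<open>x = Inr (Inl g)\<close> xy z by auto
      next
        case (c k') then show False using BC[of g k'] \<open>x = Inr (Inl g)\<close> \<open>g \<in> X (d - i)\<close> z by auto
      qed
    next
      case (c k)
      show False using y
      proof (cases rule: Dom_cases)
        case (a b') then show False using AD[of b' k] \<open>x = Inr (Inr k)\<close> \<open>k \<in> Z\<close> z by auto
      next
        case (b g') then show False using BC[of g' k] \<open>x = Inr (Inr k)\<close> \<open>k \<in> Z\<close> z by auto
      next
        case (c k') then show False using CC[of k k'] \<open>x = Inr (Inr k)\<close> xy z by auto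
      qed
    qed
  qed
qed

lemma G_cover:
  assumes i: "1 \<le> i" "i < d" and b: "b \<in> mons r i" and ne: "Tset r S b \<noteq> {}"
  shows "Tset r S b \<in> G i ` Dom i"
proof -
  obtain g where g: "g \<in> Tset r S b" using ne by blast
  have mb: "mdeg b = i" using b by (simp add: mons_def)
  show ?thesis
  proof (cases "\<exists>v\<ge>3. lk b v > 0")
    case False
    then have "b \<in> X i" using mb by (auto simp: X_mem)
    then show ?thesis by (force simp: G_def Dom_def)
  next
    case True
    then obtain v where v: "3 \<le> v" "lk b v > 0" by blast
    have T: "Tset r S b = {g}" using T_single[OF v g] .
    have s: "g + b \<in> S" using g by (simp add: Tset_def)
    have md: "mdeg g + i = d" using S_mons s mb by (auto simp: mons_def)
    show ?thesis using s
    proof (cases rule: S_cases)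
      case (y a)
      have "lk g w = 0" if w: "3 \<le> w" for w
      proof -
        have "lk (g + b) w = (if w = idx a then 1 else 0)"
          using lk_y[OF y(1) w] by (simp only: y(2))
        then have e1: "lk g w + lk b w = (if w = idx a then 1 else 0)" by (simp add: lookup_add)
        have "lk (g + b) v = (if v = idx a then 1 else 0)"
          using lk_y[OF y(1) v(1)] by (simp only: y(2))
        then have e2: "lk g v + lk b v = (if v = idx a then 1 else 0)" by (simp add: lookup_add)
        show ?thesis using e1 e2 v by (auto split: if_splits)
      qed
      then have "g \<in> X (d - i)" using md by (auto simp: X_mem)
      then show ?thesis using T by (force simp: G_def Dom_def)
    next
      case (z k)
      have "lk g w = 0" if "w \<noteq> k" for w
      proof -
        have "lk (g + b) w = 0" using z that by (simp add: lk_sg)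
        then show ?thesis by (simp add: lookup_add)
      qed
      then have "g = sg k (lk g k)" by (intro poly_mapping_eqI) (auto simp: lk_sg)
      moreover then have "lk g k = d - i" using md by (metis add_diff_cancel_right' mdeg_single)
      ultimately have "g = sg k (d - i)" by simp
      then show ?thesis using T z by (force simp: G_def Dom_def)
    qed
  qed
qed

end



lemma card_pairs: "2 * card {(a, b). a + b \<le> (k::nat)} = (k + 1) * (k + 2)"
proof -
  have eq: "{(a, b). a + b \<le> k} = Sigma {..k} (\<lambda>a. {..k - a})" by auto
  have "card (Sigma {..k} (\<lambda>a. {..k - a})) = (\<Sum>a\<le>k. Suc (k - a))"
    by (simp add: card_SigmaI)
  moreover have "2 * (\<Sum>a\<le>k. Suc (k - a)) = (k + 1) * (k + 2)"
  proof (induction k)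
    case 0 then show ?case by simp
  next
    case (Suc k)
    have "(\<Sum>a\<le>Suc k. Suc (Suc k - a)) = (\<Sum>a\<le>k. Suc (Suc k - a)) + 1"
      by simp
    also have "(\<Sum>a\<le>k. Suc (Suc k - a)) = (\<Sum>a\<le>k. Suc (k - a) + 1)"
      by (rule sum.cong) (auto simp: Suc_diff_le)
    also have "\<dots> = (\<Sum>a\<le>k. Suc (k - a)) + (\<Sum>a\<le>k. (1::nat))" by (rule sum.distrib)
    also have "\<dots> = (\<Sum>a\<le>k. Suc (k - a)) + (k + 1)" by simp
    finally have "2 * (\<Sum>a\<le>Suc k. Suc (Suc k - a)) = 2 * (\<Sum>a\<le>k. Suc (k - a)) + 2 * (k + 2)"
      by simp
    then show ?case using Suc.IH by simp
  qed
  ultimately show ?thesis using eq by simp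
qed

context conc begin

lemma card_X: "2 * card (X k) = (k + 1) * (k + 2)"
proof -
  let ?f = "\<lambda>b. (lk b 0, lk b 1)"
  have inj: "inj_on ?f (X k)"
  proof (rule inj_onI)
    fix a b assume "a \<in> X k" "b \<in> X k" "?f a = ?f b"
    then show "a = b" using X_eqI[of a k b] by simp
  qed
  have img: "?f ` X k = {(a, b). a + b \<le> k}"
  proof
    show "?f ` X k \<subseteq> {(a, b). a + b \<le> k}" using X_mdeg by fastforce
    show "{(a, b). a + b \<le> k} \<subseteq> ?f ` X k"
    proof (clarify)
      fix a b assume ab: "a + b \<le> k"
      define m where "m = sg 0 a + sg 1 b + sg 2 (k - a - b)"
      have m1: "m \<in> X k" using ab by (auto simp: m_def X_mem lookup_add lk_sg)
      have m2: "?f m = (a, b)" by (simp add: m_def lookup_add lk_sg)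
      show "(a, b) \<in> ?f ` X k" by (rule image_eqI[where x=m]) (use m1 m2 in simp_all)
    qed
  qed
  have "card (X k) = card {(a, b). a + b \<le> k}" using card_image[OF inj] img by simp
  then show ?thesis using card_pairs by simp
qed

lemma hilb_mid:
  assumes i: "1 \<le> i" "i < d"
  shows "hilb r (annS r S :: 'k::field mpoly set) i = card (X i) + card (X (d - i)) + card Z"
proof -
  have eqset: "Tset r S ` mons r i - {{}} = G i ` Dom i"
  proof
    show "Tset r S ` mons r i - {{}} \<subseteq> G i ` Dom i" using G_cover[OF i] by blast
    show "G i ` Dom i \<subseteq> Tset r S ` mons r i - {{}}" using Dom_nonempty_in[OF i] by blast
  qed
  have disj: "\<forall>b\<in>mons r i. \<forall>b'\<in>mons r i. Tset r S b = Tset r S b' \<or> Tset r S b \<inter> Tset r S b' = {}"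
  proof (intro ballI)
    fix b b' assume b: "b \<in> mons r i" and b': "b' \<in> mons r i"
    show "Tset r S b = Tset r S b' \<or> Tset r S b \<inter> Tset r S b' = {}"
    proof (cases "Tset r S b = {} \<or> Tset r S b' = {}")
      case True then show ?thesis by auto
    next
      case False
      then obtain x y where "x \<in> Dom i" "y \<in> Dom i" "Tset r S b = G i x" "Tset r S b' = G i y"
        using G_cover[OF i b] G_cover[OF i b'] by blast
      then show ?thesis using G_disj[OF i] by metis
    qed
  qed
  have inj: "inj_on (G i) (Dom i)"
  proof (rule inj_onI)
    fix x y assume "x \<in> Dom i" "y \<in> Dom i" "G i x = G i y"
    then show "x = y" using G_disj[OF i] Dom_nonempty_in[OF i] by (metis Int_absorb)
  qed
  have "hilb r (annS r S :: 'k::field mpoly set) i = card (Tset r S ` mons r i - {{}})"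
    by (rule hilb_formula[OF finite_S disj])
  also have "\<dots> = card (Dom i)" using eqset card_image[OF inj] by simp
  also have "\<dots> = card (X i) + card (X (d - i)) + card Z"
    using YZ by (simp add: Dom_def card_Plus finite_X finite_subset)
  finally show ?thesis .
qed

lemma hilb_one: "hilb r (annS r S :: 'k::field mpoly set) 1 = r"
proof -
  have "2 * card (X 1) = 6" using card_X[of 1] by simp
  then have "card (X 1) = 3" by simp
  moreover have "hilb r (annS r S :: 'k::field mpoly set) 1 = card (X 1) + card (X (d - 1)) + card Z"
    using hilb_mid[of 1] d2 by simp
  ultimately show ?thesis using card_Z card_X_le rbig by arith
qed

lemma hilb_dec:
  assumes i: "1 \<le> i" "i < d div 2"
  shows "hilb r (annS r S :: 'k::field mpoly set) (Suc i) < hilb r (annS r S :: 'k::field mpoly set) i"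
proof -
  define m where "m = d - i"
  have im: "i + 2 \<le> m" using i by (simp add: m_def)
  then obtain t where t: "m = i + 2 + t" using le_Suc_ex by blast
  have dm: "d - Suc i = m - 1" by (simp add: m_def)
  have "Suc i < d" using i by presburger
  have c1: "2 * card (X i) = (i + 1) * (i + 2)" by (rule card_X)
  have c2: "2 * card (X (Suc i)) = (Suc i + 1) * (Suc i + 2)" by (rule card_X)
  have c3: "2 * card (X m) = (m + 1) * (m + 2)" by (rule card_X)
  have c4: "2 * card (X (m - 1)) = (m - 1 + 1) * (m - 1 + 2)" by (rule card_X)
  have ineq: "(Suc i + 1) * (Suc i + 2) + (m - 1 + 1) * (m - 1 + 2) < (i + 1) * (i + 2) + (m + 1) * (m + 2)"
    unfolding t by (simp add: algebra_simps)
  have "card (X (Suc i)) + card (X (m - 1)) < card (X i) + card (X m)"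
    using c1 c2 c3 c4 ineq by linarith
  moreover have "hilb r (annS r S :: 'k::field mpoly set) i = card (X i) + card (X m) + card Z"
    using hilb_mid[of i] i div_le_dividend[of d 2] by (simp add: m_def)
  moreover have "hilb r (annS r S :: 'k::field mpoly set) (Suc i) = card (X (Suc i)) + card (X (m - 1)) + card Z"
    using hilb_mid[of "Suc i"] i dm \<open>Suc i < d\<close> by simp
  ultimately show ?thesis by simp
qed

end

theorem corollary2p4:
  fixes d :: nat
  assumes "d \<ge> 4"
  shows "\<exists>r0::nat. r0 > 0 \<and> (\<forall>r\<ge>r0. \<exists>I :: ('k::field_char_0) mpoly set.
           AG_algebra r I d \<and> hilb r I 1 = r \<and>
           (\<forall>i. 1 \<le> i \<and> i < d div 2 \<longrightarrow> hilb r I (Suc i) < hilb r I i))"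
proof (rule exI[of _ "3 + d * d"], intro conjI allI impI)
  show "0 < 3 + d * d" by simp
  fix r assume r: "3 + d * d \<le> r"
  interpret c: conc d r using assms r by unfold_locales auto
  show "\<exists>I :: 'k mpoly set. AG_algebra r I d \<and> hilb r I 1 = r \<and>
           (\<forall>i. 1 \<le> i \<and> i < d div 2 \<longrightarrow> hilb r I (Suc i) < hilb r I i)"
    using AG_general[OF c.S_mons c.finite_S c.S_nonempty] c.hilb_one c.hilb_dec by blast
qed



end
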